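(* Let $M$ be a down-shop-monoid on $[n]$, let $g$ be the maximal reflexive and symmetric multipermutation in $M$ (which is a blurred permutation), and let $f$ be a blurred permutation on $[n]$ that respects $g$. Then $f\in M$ if and only if there exists a multipermutation $f'$ that is a sub-multipermutation of $f$ with $f'\in M$.
   Context: A multipermutation on $[n]$ is a map $f:[n]\to\mathcal{P}([n])\setminus\{\emptyset\}$ with every $y$ in some $f(x)$; $(g\circ f)(x)=\{z:\exists y\,(y\in f(x)\wedge z\in g(y))\}$; $f'$ is a sub-multipermutation of $f$ if $f'(x)\subseteq f(x)$ for all $x$. A down-shop-monoid (DSM) is a set of multipermutations containing the identity $x\mapsto\{x\}$, closed under composition and under sub-multipermutations that are multipermutations; each DSM has a unique maximal (w.r.t. sub-multipermutation) reflexive ($a\in g(a)$) and symmetric ($a\in g(b)\iff b\in g(a)$) member. A blurred permutation with associated partition $P_1,\dots,P_m$ is a multipermutation $h$ for which there is a permutation $\sigma$ of $[m]$ ($m\le n$) with $i\in P_i$ for $i\in[m]$ and $h(x)=P_{\sigma(i)}$ for all $x\in P_i$. A multipermutation $f$ respects the blurred permutation $g$ (with partition $P_1,\dots,P_m$) if neither (i) there are $a,b$ in the same block and $c,d$ in distinct blocks with $c\in f(a)$, $d\in f(b)$, nor (ii) there are $a,b$ in distinct blocks and $c,d$ in the same block with $c\in f(a)$, $d\in f(b)$. *)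

theory Defs
  imports Main
begin

(* A multipermutation on [n] = {1..n} is represented extensionally as a map
   nat => nat set that is {} outside [n]. *)
definition multiperm :: "nat \<Rightarrow> (nat \<Rightarrow> nat set) \<Rightarrow> bool" where
  "multiperm n f \<longleftrightarrow>
     (\<forall>x\<in>{1..n}. f x \<noteq> {} \<and> f x \<subseteq> {1..n}) \<and>
     (\<forall>x. x \<notin> {1..n} \<longrightarrow> f x = {}) \<and>
     (\<forall>y\<in>{1..n}. \<exists>x\<in>{1..n}. y \<in> f x)"

definition mp_id :: "nat \<Rightarrow> nat \<Rightarrow> nat set" where
  "mp_id n = (\<lambda>x. if x \<in> {1..n} then {x} else {})"

definition mp_comp :: "(nat \<Rightarrow> nat set) \<Rightarrow> (nat \<Rightarrow> nat set) \<Rightarrow> nat \<Rightarrow> nat set" where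
  "mp_comp g f = (\<lambda>x. {z. \<exists>y. y \<in> f x \<and> z \<in> g y})"

definition sub_mp :: "(nat \<Rightarrow> nat set) \<Rightarrow> (nat \<Rightarrow> nat set) \<Rightarrow> bool" where
  "sub_mp f' f \<longleftrightarrow> (\<forall>x. f' x \<subseteq> f x)"

definition DSM :: "nat \<Rightarrow> (nat \<Rightarrow> nat set) set \<Rightarrow> bool" where
  "DSM n M \<longleftrightarrow>
     (\<forall>f\<in>M. multiperm n f) \<and>
     mp_id n \<in> M \<and>
     (\<forall>f\<in>M. \<forall>g\<in>M. mp_comp g f \<in> M) \<and>
     (\<forall>f\<in>M. \<forall>f'. multiperm n f' \<and> sub_mp f' f \<longrightarrow> f' \<in> M)"

definition refl_sym_mp :: "nat \<Rightarrow> (nat \<Rightarrow> nat set) \<Rightarrow> bool" where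
  "refl_sym_mp n g \<longleftrightarrow>
     (\<forall>a\<in>{1..n}. a \<in> g a) \<and>
     (\<forall>a\<in>{1..n}. \<forall>b\<in>{1..n}. a \<in> g b \<longleftrightarrow> b \<in> g a)"

(* h is a blurred permutation with associated partition P_1..P_m and permutation sigma of [m] *)
definition blurred_wrt ::
  "nat \<Rightarrow> (nat \<Rightarrow> nat set) \<Rightarrow> nat \<Rightarrow> (nat \<Rightarrow> nat set) \<Rightarrow> (nat \<Rightarrow> nat) \<Rightarrow> bool" where
  "blurred_wrt n h m P \<sigma> \<longleftrightarrow>
     multiperm n h \<and> m \<le> n \<and>
     (\<forall>i\<in>{1..m}. P i \<noteq> {} \<and> P i \<subseteq> {1..n} \<and> i \<in> P i) \<and>
     (\<forall>i\<in>{1..m}. \<forall>j\<in>{1..m}. i \<noteq> j \<longrightarrow> P i \<inter> P j = {}) \<and>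
     (\<Union>i\<in>{1..m}. P i) = {1..n} \<and>
     bij_betw \<sigma> {1..m} {1..m} \<and>
     (\<forall>i\<in>{1..m}. \<forall>x\<in>P i. h x = P (\<sigma> i))"

definition blurred_perm :: "nat \<Rightarrow> (nat \<Rightarrow> nat set) \<Rightarrow> bool" where
  "blurred_perm n h \<longleftrightarrow> (\<exists>m P \<sigma>. blurred_wrt n h m P \<sigma>)"

definition same_block :: "nat \<Rightarrow> (nat \<Rightarrow> nat set) \<Rightarrow> nat \<Rightarrow> nat \<Rightarrow> bool" where
  "same_block m P a b \<longleftrightarrow> (\<exists>i\<in>{1..m}. a \<in> P i \<and> b \<in> P i)"

definition respects_bp :: "nat \<Rightarrow> (nat \<Rightarrow> nat set) \<Rightarrow> (nat \<Rightarrow> nat set) \<Rightarrow> bool" where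
  "respects_bp n f g \<longleftrightarrow>
     (\<exists>m P \<sigma>. blurred_wrt n g m P \<sigma> \<and>
        \<not> (\<exists>a\<in>{1..n}. \<exists>b\<in>{1..n}. \<exists>c\<in>{1..n}. \<exists>d\<in>{1..n}.
              same_block m P a b \<and> \<not> same_block m P c d \<and> c \<in> f a \<and> d \<in> f b) \<and>
        \<not> (\<exists>a\<in>{1..n}. \<exists>b\<in>{1..n}. \<exists>c\<in>{1..n}. \<exists>d\<in>{1..n}.
              \<not> same_block m P a b \<and> same_block m P c d \<and> c \<in> f a \<and> d \<in> f b))"

end

theory Submission
  imports Defs
begin

theorem lemma3p6:
  fixes n :: nat and M :: "(nat \<Rightarrow> nat set) set" and g f :: "nat \<Rightarrow> nat set"
  assumes "DSM n M"
    and "g \<in> M" and "refl_sym_mp n g"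
    and "\<forall>h\<in>M. refl_sym_mp n h \<longrightarrow> sub_mp h g"
    and "blurred_perm n f"
    and "respects_bp n f g"
  shows "f \<in> M \<longleftrightarrow> (\<exists>f'. multiperm n f' \<and> sub_mp f' f \<and> f' \<in> M)"
proof
  have mf: "multiperm n f" using assms(5) unfolding blurred_perm_def blurred_wrt_def by blast
  show "f \<in> M \<Longrightarrow> (\<exists>f'. multiperm n f' \<and> sub_mp f' f \<and> f' \<in> M)"
    using mf by (auto simp: sub_mp_def)
  assume "\<exists>f'. multiperm n f' \<and> sub_mp f' f \<and> f' \<in> M"
  then obtain f' where mf': "multiperm n f'" and sf: "sub_mp f' f" and f'M: "f' \<in> M" by blast
  obtain m P \<sigma> where bw: "blurred_wrt n g m P \<sigma>" and
    r1: "\<not> (\<exists>a\<in>{1..n}. \<exists>b\<in>{1..n}. \<exists>c\<in>{1..n}. \<exists>d\<in>{1..n}.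
              same_block m P a b \<and> \<not> same_block m P c d \<and> c \<in> f a \<and> d \<in> f b)"
    using assms(6) unfolding respects_bp_def by blast
  have refl: "\<And>a. a \<in> {1..n} \<Longrightarrow> a \<in> g a" using assms(3) unfolding refl_sym_mp_def by blast
  have Pcov: "\<And>x. x \<in> {1..n} \<Longrightarrow> \<exists>i\<in>{1..m}. x \<in> P i" using bw unfolding blurred_wrt_def by blast
  have gP: "\<And>i x. i \<in> {1..m} \<Longrightarrow> x \<in> P i \<Longrightarrow> g x = P i"
  proof -
    fix i x assume i: "i \<in> {1..m}" and x: "x \<in> P i"
    have xn: "x \<in> {1..n}" using bw i x unfolding blurred_wrt_def by blast
    have g1: "g x = P (\<sigma> i)" using bw i x unfolding blurred_wrt_def by blast
    have si: "\<sigma> i \<in> {1..m}" using bw i unfolding blurred_wrt_def bij_betw_def by blast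
    have "x \<in> P (\<sigma> i)" using refl[OF xn] g1 by simp
    then have "\<sigma> i = i" using bw i si x unfolding blurred_wrt_def by blast
    then show "g x = P i" using g1 by simp
  qed
  have fn: "\<And>x. x \<in> {1..n} \<Longrightarrow> f x \<subseteq> {1..n}" using mf unfolding multiperm_def by blast
  define h where "h = mp_comp g (mp_comp f' g)"
  have hM: "h \<in> M" using assms(1,2) f'M unfolding h_def DSM_def by blast
  have "sub_mp f h"
    unfolding sub_mp_def
  proof
    fix x
    show "f x \<subseteq> h x"
    proof (cases "x \<in> {1..n}")
      case False
      then show ?thesis using mf unfolding multiperm_def by blast
    next
      case True
      obtain z where z: "z \<in> f' x" using mf' True unfolding multiperm_def by blast
      have zf: "z \<in> f x" using z sf unfolding sub_mp_def by blast
      have zn: "z \<in> {1..n}" using zf fn True by blast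
      obtain i where i: "i \<in> {1..m}" "x \<in> P i" using Pcov True by blast
      have sbx: "same_block m P x x" using i unfolding same_block_def by blast
      show ?thesis
      proof
        fix c assume c: "c \<in> f x"
        have cn: "c \<in> {1..n}" using c fn True by blast
        have "same_block m P c z" using r1 sbx True cn zn c zf by blast
        then obtain j where j: "j \<in> {1..m}" "c \<in> P j" "z \<in> P j" unfolding same_block_def by blast
        have "c \<in> g z" using gP[OF j(1) j(3)] j(2) by simp
        then show "c \<in> h x" unfolding h_def mp_comp_def using refl[OF True] z by blast
      qed
    qed
  qed
  then show "f \<in> M" using assms(1) hM mf unfolding DSM_def by blast
qed

end
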